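(* Let $r \geq 1$ be an integer and define $f \in \mathbb{Z}^{2r+1}$ by $f_1 = f_2 = f_3 = 1$ and $f_i = f_{i-2} + f_{i-1}$ for $i = 4, \ldots, 2r+1$. Then for every integer $\tau$ with $0 \leq \tau \leq \sum_{i=1}^{2r+1} f_i$, there exists a subset $S \subseteq \{1, \ldots, 2r+1\}$ such that $\tau = \sum_{i \in S} f_i$. *)

theory Defs
  imports Main
begin

text \<open>The sequence f with f 1 = f 2 = f 3 = 1 and f i = f (i-2) + f (i-1) for i \<ge> 4.
  Only indices 1..2r+1 are relevant; the value at index 0 is an arbitrary convention (0).\<close>
fun fseq :: "nat \<Rightarrow> int" where
  "fseq 0 = 0"
| "fseq (Suc 0) = 1"
| "fseq (Suc (Suc 0)) = 1"
| "fseq (Suc (Suc (Suc 0))) = 1"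
| "fseq (Suc (Suc (Suc (Suc n)))) = fseq (Suc (Suc n)) + fseq (Suc (Suc (Suc n)))"

end

theory Submission
  imports Defs
begin

lemma fseq_nonneg: "fseq n \<ge> 0"
  by (induction n rule: fseq.induct) auto

lemma fseq_bound: "fseq k \<le> 1 + (\<Sum>i = 1..<k. fseq i)"
proof (cases k rule: fseq.cases)
  case (5 n)
  have "(\<Sum>i\<in>{Suc (Suc n), Suc (Suc (Suc n))}. fseq i) \<le> (\<Sum>i = 1..<k. fseq i)"
    by (rule sum_mono2) (auto simp: 5 fseq_nonneg)
  then show ?thesis using 5 by simp
next
  case 1 then show ?thesis by simp
next
  case 2 then show ?thesis by simp
next
  case 3 then show ?thesis by (simp add: fseq_nonneg)
next
  case 4 then show ?thesis by (simp add: numeral_eq_Suc atLeastLessThanSuc)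
qed

lemma subset_sums: "0 \<le> \<tau> \<Longrightarrow> \<tau> \<le> (\<Sum>i = 1..n. fseq i) \<Longrightarrow>
   \<exists>S. S \<subseteq> {1..n} \<and> \<tau> = (\<Sum>i\<in>S. fseq i)"
proof (induction n arbitrary: \<tau>)
  case 0
  then show ?case by (intro exI[of _ "{}"]) auto
next
  case (Suc n)
  have split: "(\<Sum>i = 1..Suc n. fseq i) = (\<Sum>i = 1..n. fseq i) + fseq (Suc n)"
    by simp
  show ?case
  proof (cases "\<tau> \<le> (\<Sum>i = 1..n. fseq i)")
    case True
    then obtain S where "S \<subseteq> {1..n}" "\<tau> = (\<Sum>i\<in>S. fseq i)" using Suc by blast
    then show ?thesis by (intro exI[of _ S]) auto
  next
    case False
    have b: "fseq (Suc n) \<le> 1 + (\<Sum>i = 1..n. fseq i)"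
      using fseq_bound[of "Suc n"] by (simp add: atLeastLessThanSuc_atLeastAtMost)
    have "0 \<le> \<tau> - fseq (Suc n)" "\<tau> - fseq (Suc n) \<le> (\<Sum>i = 1..n. fseq i)"
      using False b Suc.prems split by linarith+
    then obtain S where S: "S \<subseteq> {1..n}" "\<tau> - fseq (Suc n) = (\<Sum>i\<in>S. fseq i)"
      using Suc.IH by blast
    have fin: "finite S" using S(1) finite_subset by blast
    have nS: "Suc n \<notin> S" using S(1) by auto
    show ?thesis
      by (intro exI[of _ "insert (Suc n) S"]) (use S fin nS in auto)
  qed
qed

theorem lemma2:
  fixes r :: nat and \<tau> :: int
  assumes "r \<ge> 1"
    and "0 \<le> \<tau>"
    and "\<tau> \<le> (\<Sum>i = 1..2*r+1. fseq i)"
  shows "\<exists>S. S \<subseteq> {1..2*r+1} \<and> \<tau> = (\<Sum>i\<in>S. fseq i)"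
  using subset_sums assms(2,3) by blast

end
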